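(* Let $U\subseteq\mathbb{R}^d$ be a U-shaped convex set, let $U^*$ be its projective dual, and let $\varepsilon>0$. Let $q$ be an (augmented) point of $\overline{\partial}U$ and let $p$ be its corresponding point on $\overline{\partial}U^*$. Then an (augmented) point $p'\in\overline{\partial}U^*$ lies in $\mathrm{Cap}_\varepsilon(p)(U^* )$ if and only if its corresponding point $q'\in\overline{\partial}U$ lies in $\mathrm{DCap}_\varepsilon(q)(U)$.
   Context: Coordinates in $\mathbb{R}^d$ are $(x_1,\dots,x_{d-1},y)$; the $y$-direction is called vertical (upward). A closed convex set $U$ is U-shaped if for every boundary point of $U$ the upward vertical ray from it lies in $U$. The lower boundary $\overline{\partial}U$ is the set of boundary points of $U$ having a non-vertical supporting hyperplane; its points are augmented: each point $q$ is paired with a non-vertical supporting hyperplane $h(q)$ of $U$ at $q$ (a point with several such hyperplanes gives several augmented points). For a point $q$, $q\pm\varepsilon$ denotes its vertical translate by $\pm\varepsilon$, and similarly for sets. The projective dual of a point $p=(p_1,\dots,p_d)$ is the non-vertical hyperplane $p^*: y=\sum_{j=1}^{d-1}p_jx_j-p_d$, and the dual of a non-vertical hyperplane is defined so that $p^{**}=p$. The dual $U^*$ is the intersection of the closed upper halfspaces of $q^*$ over all $q\in\overline{\partial}U$; it is U-shaped. The augmented point $q$ with hyperplane $h(q)$ corresponds to the augmented point $h(q)^*$ of $\overline{\partial}U^*$ with supporting hyperplane $q^*$; this is a bijection. The $\varepsilon$-cap $\mathrm{Cap}_\varepsilon(q)(U)$ is the set of augmented points of $\overline{\partial}U$ lying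 in the closed lower halfspace of $h(q)+\varepsilon$. The $\varepsilon$-dual cap $\mathrm{DCap}_\varepsilon(q)(U)$ is the set of augmented points $p\in\overline{\partial}U$ such that $q-\varepsilon$ lies in the closed lower halfspace of $h(p)$. *)

theory Defs
  imports "HOL-Analysis.Analysis"
begin

text \<open>Points of R^d are pairs (x, y) with x :: 'a (the first d-1 coordinates,
  'a a Euclidean space) and y :: real (the vertical coordinate).
  A non-vertical hyperplane  y = <a,x> - b  is represented by its coefficient
  pair (a, b) :: 'a \<times> real.\<close>

definition hyperplane :: "'a::euclidean_space \<times> real \<Rightarrow> ('a \<times> real) set" where
  "hyperplane c = {(x, y). y = fst c \<bullet> x - snd c}"

definition upper_hs :: "'a::euclidean_space \<times> real \<Rightarrow> ('a \<times> real) set" where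
  "upper_hs c = {(x, y). y \<ge> fst c \<bullet> x - snd c}"

definition lower_hs :: "'a::euclidean_space \<times> real \<Rightarrow> ('a \<times> real) set" where
  "lower_hs c = {(x, y). y \<le> fst c \<bullet> x - snd c}"

text \<open>Vertical translate of a hyperplane / point by e (upward for e > 0).\<close>
definition hshift :: "'a::euclidean_space \<times> real \<Rightarrow> real \<Rightarrow> 'a \<times> real" where
  "hshift c e = (fst c, snd c - e)"

definition vshift :: "'a::euclidean_space \<times> real \<Rightarrow> real \<Rightarrow> 'a \<times> real" where
  "vshift q e = (fst q, snd q + e)"

text \<open>Projective duality: the dual of the point p = (p', p_d) is the hyperplane
  y = <p',x> - p_d, whose coefficient pair is p itself; the dual of the hyperplane
  with coefficients c is the point c, so that p** = p.\<close>
definition pdual :: "'a::euclidean_space \<times> real \<Rightarrow> 'a \<times> real" where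
  "pdual p = p"

definition hdual :: "'a::euclidean_space \<times> real \<Rightarrow> 'a \<times> real" where
  "hdual c = c"

definition U_shaped :: "('a::euclidean_space \<times> real) set \<Rightarrow> bool" where
  "U_shaped U \<longleftrightarrow> closed U \<and> convex U \<and>
     (\<forall>q \<in> frontier U. \<forall>t \<ge> 0. vshift q t \<in> U)"

definition supporting :: "('a::euclidean_space \<times> real) set \<Rightarrow> 'a \<times> real \<Rightarrow> 'a \<times> real \<Rightarrow> bool" where
  "supporting U q c \<longleftrightarrow> q \<in> U \<and> q \<in> hyperplane c \<and> (U \<subseteq> upper_hs c \<or> U \<subseteq> lower_hs c)"

definition aug_lower :: "('a::euclidean_space \<times> real) set \<Rightarrow> (('a \<times> real) \<times> ('a \<times> real)) set" where
  "aug_lower U = {(q, c). q \<in> frontier U \<and> supporting U q c}"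

definition lower_boundary :: "('a::euclidean_space \<times> real) set \<Rightarrow> ('a \<times> real) set" where
  "lower_boundary U = fst ` aug_lower U"

definition dual_set :: "('a::euclidean_space \<times> real) set \<Rightarrow> ('a \<times> real) set" where
  "dual_set U = (\<Inter>q \<in> lower_boundary U. upper_hs (pdual q))"

definition corr :: "('a::euclidean_space \<times> real) \<times> ('a \<times> real) \<Rightarrow> ('a \<times> real) \<times> ('a \<times> real)" where
  "corr a = (hdual (snd a), pdual (fst a))"

definition Cap :: "real \<Rightarrow> ('a::euclidean_space \<times> real) \<times> ('a \<times> real) \<Rightarrow> ('a \<times> real) set
     \<Rightarrow> (('a \<times> real) \<times> ('a \<times> real)) set" where
  "Cap e a U = {p \<in> aug_lower U. fst p \<in> lower_hs (hshift (snd a) e)}"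

definition DCap :: "real \<Rightarrow> ('a::euclidean_space \<times> real) \<times> ('a \<times> real) \<Rightarrow> ('a \<times> real) set
     \<Rightarrow> (('a \<times> real) \<times> ('a \<times> real)) set" where
  "DCap e a U = {p \<in> aug_lower U. vshift (fst a) (- e) \<in> lower_hs (snd p)}"

end

theory Submission imports Defs begin

lemma mem_upper: "p \<in> upper_hs c \<longleftrightarrow> fst c \<bullet> fst p - snd c \<le> snd p"
  by (cases p) (simp add: upper_hs_def)
lemma mem_lower: "p \<in> lower_hs c \<longleftrightarrow> snd p \<le> fst c \<bullet> fst p - snd c"
  by (cases p) (simp add: lower_hs_def)
lemma mem_hyp: "p \<in> hyperplane c \<longleftrightarrow> snd p = fst c \<bullet> fst p - snd c"
  by (cases p) (simp add: hyperplane_def)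
lemma upper_sym: "p \<in> upper_hs c \<longleftrightarrow> c \<in> upper_hs p"
  by (auto simp: mem_upper inner_commute)
lemma hyp_sym: "p \<in> hyperplane c \<longleftrightarrow> c \<in> hyperplane p"
  by (auto simp: mem_hyp inner_commute)

lemma frontier_support:
  fixes U :: "('a::euclidean_space \<times> real) set"
  assumes "p \<in> U" "p \<in> hyperplane a" "U \<subseteq> upper_hs a"
  shows "p \<in> frontier U"
proof -
  have "p \<notin> interior U"
  proof
    assume "p \<in> interior U"
    then obtain r where r: "r > 0" "ball p r \<subseteq> U" by (meson mem_interior)
    define v where "v = (fst p, snd p - r/2)"
    have "dist p v = r/2" using r by (cases p) (simp add: v_def dist_Pair_Pair dist_real_def)
    then have "v \<in> U" using r by auto
    then have "v \<in> upper_hs a" using assms by auto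
    then show False using assms(2) r by (simp add: mem_upper mem_hyp v_def)
  qed
  then show ?thesis using assms(1) closure_subset by (auto simp: frontier_def)
qed

lemma sep_step:
  fixes U :: "('a::euclidean_space \<times> real) set"
  assumes "closed U" "convex U" "c' \<in> dual_set U" "dual_set U \<subseteq> upper_hs q0" "q0 \<in> hyperplane c'"
  shows "q0 \<in> U"
proof (rule ccontr)
  assume "q0 \<notin> U"
  then obtain n \<beta> where n: "n \<bullet> q0 < \<beta>" "\<forall>x\<in>U. n \<bullet> x > \<beta>"
    using separating_hyperplane_closed_point[OF assms(2,1)] by blast
  obtain w \<alpha> where nw: "n = (w, \<alpha>)" by (cases n)
  define \<mu> where "\<mu> = 1 / (1 + \<bar>\<alpha>\<bar>)"
  define k where "k = 1 + \<mu> * \<alpha>"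
  have mu: "\<mu> > 0" unfolding \<mu>_def by (simp add: add_pos_nonneg)
  have "\<mu> * \<bar>\<alpha>\<bar> < 1" unfolding \<mu>_def by (simp add: field_simps)
  moreover have "\<mu> * (- \<alpha>) \<le> \<mu> * \<bar>\<alpha>\<bar>"
    using mult_left_mono[OF abs_ge_minus_self[of \<alpha>], of \<mu>] mu by simp
  ultimately have k: "k > 0" unfolding k_def by simp
  define c2 where "c2 = ((1/k) *\<^sub>R (fst c' - \<mu> *\<^sub>R w), (snd c' - \<mu> * \<beta>) / k)"
  have phi: "p \<in> upper_hs c2 \<longleftrightarrow>
     0 \<le> (snd p - fst c' \<bullet> fst p + snd c') + \<mu> * (w \<bullet> fst p + \<alpha> * snd p - \<beta>)" for p
  proof -
    have "p \<in> upper_hs c2 \<longleftrightarrow> (1/k) * ((fst c' - \<mu> *\<^sub>R w) \<bullet> fst p) - (snd c' - \<mu> * \<beta>) / k \<le> snd p"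
      by (simp add: mem_upper c2_def)
    also have "\<dots> \<longleftrightarrow> (fst c' - \<mu> *\<^sub>R w) \<bullet> fst p - (snd c' - \<mu> * \<beta>) \<le> k * snd p"
      using k by (simp add: field_simps)
    also have "\<dots> \<longleftrightarrow> 0 \<le> (snd p - fst c' \<bullet> fst p + snd c') + \<mu> * (w \<bullet> fst p + \<alpha> * snd p - \<beta>)"
      by (simp add: k_def inner_diff_left algebra_simps)
    finally show ?thesis .
  qed
  have "c2 \<in> dual_set U"
    unfolding dual_set_def pdual_def
  proof
    fix p assume p: "p \<in> lower_boundary U"
    then have pU: "p \<in> U" by (auto simp: lower_boundary_def aug_lower_def supporting_def)
    have "c' \<in> upper_hs p" using assms(3) p by (auto simp: dual_set_def pdual_def)
    then have "p \<in> upper_hs c'" using upper_sym by blast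
    then have "0 \<le> snd p - fst c' \<bullet> fst p + snd c'" by (simp add: mem_upper)
    moreover have "w \<bullet> fst p + \<alpha> * snd p - \<beta> > 0" using n(2) pU nw by (cases p) auto
    ultimately have "p \<in> upper_hs c2" using phi mu by (smt (verit) mult_pos_pos)
    then show "c2 \<in> upper_hs p" using upper_sym by blast
  qed
  then have "q0 \<in> upper_hs c2" using assms(4) upper_sym by blast
  moreover have "snd q0 - fst c' \<bullet> fst q0 + snd c' = 0" using assms(5) by (simp add: mem_hyp)
  moreover have "w \<bullet> fst q0 + \<alpha> * snd q0 - \<beta> < 0" using n(1) nw by (cases q0) auto
  ultimately show False using phi mu by (smt (verit) mult_pos_neg)
qed


lemma lower_above:
  fixes U :: "('a::euclidean_space \<times> real) set"
  assumes cl: "closed U" and cv: "convex U" and Uc: "U \<subseteq> upper_hs c"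
    and lb: "\<forall>p\<in>lower_boundary U. p \<in> upper_hs c'"
  shows "U \<subseteq> upper_hs c'"
proof
  fix z assume zU: "z \<in> U"
  show "z \<in> upper_hs c'"
  proof (rule ccontr)
    assume nz: "z \<notin> upper_hs c'"
    define F where "F p = snd p - fst c' \<bullet> fst p + snd c'" for p :: "'a \<times> real"
    define \<psi> where "\<psi> p = F p + (norm (fst p - fst z))^2" for p :: "'a \<times> real"
    have Fz: "F z < 0" using nz by (simp add: F_def mem_upper)
    have psiz: "\<psi> z = F z" by (simp add: \<psi>_def)
    define K where "K = U \<inter> {p. \<psi> p \<le> \<psi> z}"
    have cont\<psi>: "continuous_on UNIV \<psi>" unfolding \<psi>_def F_def by (intro continuous_intros)
    have "closed K" unfolding K_def
      by (intro closed_Int cl closed_Collect_le[OF cont\<psi> continuous_on_const])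
    moreover have "bounded K"
    proof -
      define B where "B = norm (fst c' - fst c)"
      define A where "A = \<bar>\<psi> z + snd c - snd c'\<bar> + B * norm (fst z)"
      define X where "X = norm (fst z) + (A + B + 1)"
      have A0: "A \<ge> 0" "B \<ge> 0" unfolding A_def B_def by auto
      have "norm p \<le> X + (norm (fst c) * X + \<bar>snd c\<bar>) + (\<bar>\<psi> z\<bar> + norm (fst c') * X + \<bar>snd c'\<bar>)"
        if pK: "p \<in> K" for p
      proof -
        obtain x y where p: "p = (x,y)" by (cases p)
        have y1: "y \<ge> fst c \<bullet> x - snd c" using pK Uc p unfolding K_def by (auto simp: mem_upper)
        have y2: "y - fst c' \<bullet> x + snd c' + (norm (x - fst z))^2 \<le> \<psi> z"
          using pK p by (simp add: K_def \<psi>_def F_def)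
        define d where "d = norm (x - fst z)"
        have e1: "(fst c' - fst c) \<bullet> x = (fst c' - fst c) \<bullet> (x - fst z) + (fst c' - fst c) \<bullet> fst z"
          by (simp add: inner_diff_right)
        have e2: "(fst c' - fst c) \<bullet> (x - fst z) \<le> B * d" unfolding B_def d_def by (rule norm_cauchy_schwarz)
        have e3: "(fst c' - fst c) \<bullet> fst z \<le> B * norm (fst z)" unfolding B_def by (rule norm_cauchy_schwarz)
        have e4: "d^2 \<le> \<psi> z + snd c - snd c' + (fst c' - fst c) \<bullet> x"
          using y1 y2 by (simp add: d_def inner_diff_left)
        have dd: "d^2 \<le> A + B * d" using e1 e2 e3 e4 unfolding A_def
          by (smt (verit) abs_ge_self)
        have dle: "d \<le> A + B + 1"
        proof (rule ccontr)
          assume "\<not> ?thesis"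
          then have dg: "d > A + B + 1" by simp
          then have "d * d > (A + B + 1) * d" using A0 by (intro mult_strict_right_mono) auto
          moreover have "A * d \<ge> A * 1" using A0 dg by (intro mult_left_mono) auto
          moreover have "d \<ge> 0" by (simp add: d_def)
          ultimately show False using dd by (simp add: power2_eq_square algebra_simps)
        qed
        have nx: "norm x \<le> X" using norm_triangle_sub[of x "fst z"] dle unfolding X_def d_def by simp
        have c1: "\<bar>fst c \<bullet> x\<bar> \<le> norm (fst c) * X"
          using Cauchy_Schwarz_ineq2[of "fst c" x] mult_left_mono[OF nx, of "norm (fst c)"] by simp
        have c2: "\<bar>fst c' \<bullet> x\<bar> \<le> norm (fst c') * X"
          using Cauchy_Schwarz_ineq2[of "fst c'" x] mult_left_mono[OF nx, of "norm (fst c')"] by simp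
        have "\<bar>y\<bar> \<le> (norm (fst c) * X + \<bar>snd c\<bar>) + (\<bar>\<psi> z\<bar> + norm (fst c') * X + \<bar>snd c'\<bar>)"
          using y1 y2 c1 c2 zero_le_power2[of "norm (x - fst z)"] by linarith
        then show ?thesis using norm_Pair_le[of x y] nx p by simp
      qed
      then show ?thesis unfolding bounded_iff by blast
    qed
    ultimately have "compact K" using compact_eq_bounded_closed by blast
    moreover have "K \<noteq> {}" using zU by (auto simp: K_def)
    ultimately obtain ps where ps: "ps \<in> K" "\<forall>u\<in>K. \<psi> ps \<le> \<psi> u"
      using continuous_attains_inf[of K \<psi>] continuous_on_subset[OF cont\<psi>] by blast
    have psU: "ps \<in> U" using ps by (simp add: K_def)
    have minU: "\<psi> ps \<le> \<psi> u" if "u \<in> U" for u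
      using ps that by (cases "u \<in> K") (auto simp: K_def)
    define a1 where "a1 = fst c' - 2 *\<^sub>R (fst ps - fst z)"
    define a where "a = (a1, a1 \<bullet> fst ps - snd ps)"
    have var: "snd u - a1 \<bullet> fst u \<ge> snd ps - a1 \<bullet> fst ps" if uU: "u \<in> U" for u
    proof -
      define A0 where "A0 = (snd u - a1 \<bullet> fst u) - (snd ps - a1 \<bullet> fst ps)"
      define B0 where "B0 = (norm (fst u - fst ps))^2"
      have key: "\<psi> (ps + t *\<^sub>R (u - ps)) - \<psi> ps = t * A0 + t^2 * B0" for t
        unfolding \<psi>_def F_def A0_def B0_def a1_def power2_norm_eq_inner
        by (simp add: power2_norm_eq_inner inner_add_left inner_add_right inner_diff_left
            inner_diff_right algebra_simps power2_eq_square inner_commute)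
      have ge: "0 \<le> t * A0 + t^2 * B0" if "0 < t" "t \<le> 1" for t
      proof -
        have "(1 - t) *\<^sub>R ps + t *\<^sub>R u \<in> U"
          using cv psU uU that unfolding convex_def by simp
        moreover have "(1 - t) *\<^sub>R ps + t *\<^sub>R u = ps + t *\<^sub>R (u - ps)" by (simp add: algebra_simps)
        ultimately have "ps + t *\<^sub>R (u - ps) \<in> U" by simp
        then have "\<psi> ps \<le> \<psi> (ps + t *\<^sub>R (u - ps))" by (rule minU)
        then show ?thesis using key[of t] by linarith
      qed
      have B0: "B0 \<ge> 0" by (simp add: B0_def)
      show ?thesis
      proof (rule ccontr)
        assume "\<not> ?thesis"
        then have An: "A0 < 0" by (simp add: A0_def)
        define t where "t = min 1 (- A0 / (2 * B0 + 1))"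
        have "- A0 / (2 * B0 + 1) > 0" using An B0 by (intro divide_pos_pos) auto
        then have t: "0 < t" "t \<le> 1" by (auto simp: t_def)
        have "t * B0 \<le> (- A0 / (2 * B0 + 1)) * B0" using B0 by (intro mult_right_mono) (auto simp: t_def)
        also have "\<dots> < - A0" using An B0 mult_nonpos_nonneg[of A0 B0] by (simp add: field_simps)
        finally have "A0 + t * B0 < 0" by simp
        then have "t * (A0 + t * B0) < 0" using t by (simp add: mult_pos_neg)
        then show False using ge[OF t] by (simp add: power2_eq_square algebra_simps)
      qed
    qed
    have Ua: "U \<subseteq> upper_hs a"
    proof
      fix u assume "u \<in> U"
      then have "snd u - a1 \<bullet> fst u \<ge> snd ps - a1 \<bullet> fst ps" by (rule var)
      then show "u \<in> upper_hs a" by (simp add: a_def mem_upper)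
    qed
    have psa: "ps \<in> hyperplane a" by (simp add: a_def mem_hyp)
    have "ps \<in> frontier U" using frontier_support[OF psU psa Ua] .
    then have "(ps, a) \<in> aug_lower U" using psU psa Ua by (simp add: aug_lower_def supporting_def)
    then have "ps \<in> lower_boundary U" unfolding lower_boundary_def by force
    then have "ps \<in> upper_hs c'" using lb by blast
    then have "F ps \<ge> 0" by (simp add: F_def mem_upper)
    moreover have "\<psi> ps \<le> \<psi> z" using ps by (simp add: K_def)
    ultimately show False using Fz psiz unfolding \<psi>_def by (smt (verit) zero_le_power2)
  qed
qed

theorem lemma6:
  fixes U :: "('a::euclidean_space \<times> real) set"
    and e :: real
    and q :: "('a \<times> real) \<times> ('a \<times> real)"
  assumes "U_shaped U" and "e > 0" and "q \<in> aug_lower U"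
  shows "\<forall>p' q'. p' \<in> aug_lower (dual_set U) \<longrightarrow> corr q' = p' \<longrightarrow>
           (p' \<in> Cap e (corr q) (dual_set U) \<longleftrightarrow> q' \<in> DCap e q U)"
proof (intro allI impI)
  have cl: "closed U" and cv: "convex U" and up: "\<forall>x\<in>frontier U. \<forall>t\<ge>0. vshift x t \<in> U"
    using assms(1) by (auto simp: U_shaped_def)
  obtain q0 c where q: "q = (q0, c)" by (cases q)
  have q0f: "q0 \<in> frontier U" and sq: "supporting U q0 c" using assms(3) q by (auto simp: aug_lower_def)
  have Uc: "U \<subseteq> upper_hs c"
  proof -
    have "\<not> U \<subseteq> lower_hs c"
    proof
      assume "U \<subseteq> lower_hs c"
      moreover have "vshift q0 1 \<in> U" using up q0f by auto
      ultimately have "vshift q0 1 \<in> lower_hs c" by blast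
      then show False using sq by (simp add: vshift_def mem_lower supporting_def mem_hyp)
    qed
    then show ?thesis using sq by (auto simp: supporting_def)
  qed
  fix p' q'
  assume p': "p' \<in> aug_lower (dual_set U)" and cq: "corr q' = p'"
  obtain q0' c' where q': "q' = (q0', c')" by (cases q')
  have p'e: "p' = (c', q0')" using cq q' by (simp add: corr_def hdual_def pdual_def)
  have c'f: "c' \<in> frontier (dual_set U)" and sp: "supporting (dual_set U) c' q0'"
    using p' p'e by (auto simp: aug_lower_def)
  have c'U: "c' \<in> dual_set U" and c'h: "c' \<in> hyperplane q0'" using sp by (auto simp: supporting_def)
  have Dup: "dual_set U \<subseteq> upper_hs q0'"
  proof -
    have "\<not> dual_set U \<subseteq> lower_hs q0'"
    proof
      assume "dual_set U \<subseteq> lower_hs q0'"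
      moreover have "(fst c', snd c' + 1) \<in> dual_set U"
        using c'U by (auto simp: dual_set_def pdual_def mem_upper)
      ultimately have "(fst c', snd c' + 1) \<in> lower_hs q0'" by blast
      then show False using c'h by (simp add: mem_lower mem_hyp)
    qed
    then show ?thesis using sp by (auto simp: supporting_def)
  qed
  have lb: "\<forall>p\<in>lower_boundary U. p \<in> upper_hs c'"
    using c'U upper_sym unfolding dual_set_def pdual_def by blast
  have Uc': "U \<subseteq> upper_hs c'" using lower_above[OF cl cv Uc lb] .
  have q0h: "q0' \<in> hyperplane c'" using c'h hyp_sym by blast
  have q0U: "q0' \<in> U" using sep_step[OF cl cv c'U Dup q0h] .
  have "q0' \<in> frontier U" using frontier_support[OF q0U q0h Uc'] .
  then have q'aug: "q' \<in> aug_lower U" using q' q0U q0h Uc' by (simp add: aug_lower_def supporting_def)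
  show "p' \<in> Cap e (corr q) (dual_set U) \<longleftrightarrow> q' \<in> DCap e q U"
    using p' q'aug unfolding Cap_def DCap_def
    by (auto simp add: p'e q q' corr_def hdual_def pdual_def hshift_def vshift_def mem_lower inner_commute)
qed

end
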